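(* Let $\vec\alpha\in\mathbb{R}^{10}$ be such that $\Psi[\vec\alpha]$ is an irreducible rational function and $\alpha_1+i\alpha_2\ne0$. Then for every $r>0$ the ten maps $K_1[\vec\alpha],\dots,K_{10}[\vec\alpha]:\mathbb{R}^2\to\mathbb{R}^3$ are linearly independent over $\mathbb{R}$.
   Context: Identify $\mathbb{R}^2$ with $\mathbb{C}$, $z=x+iy$; $\mathcal S(z)=\frac{1}{1+|z|^2}(2\,\mathrm{Re}\,z,2\,\mathrm{Im}\,z,|z|^2-1)$ is the stereographic projection. For $\vec\alpha=(\alpha_1,\dots,\alpha_{10})\in\mathbb{R}^{10}$ let $\Psi[\vec\alpha](z)=\frac{(\alpha_1+i\alpha_2)z^2+(\alpha_3+i\alpha_4)z+(\alpha_5+i\alpha_6)}{1-(\alpha_7+i\alpha_8)z-(\alpha_9+i\alpha_{10})z^2}$. For a parameter $r>0$ and $i=1,\dots,10$, $K_i[\vec\alpha]=r^{\beta_i}\,\partial_{\alpha_i}\mathcal S(\Psi[\vec\alpha])$, where $\beta_i=0$ for $i\in\{1,2,5,6\}$, $\beta_i=-1$ for $i\in\{3,4,7,8\}$, $\beta_i=-2$ for $i\in\{9,10\}$. *)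

theory Defs
  imports "HOL-Analysis.Analysis" "HOL-Computational_Algebra.Polynomial"
begin

text \<open>Parameters alpha are indexed 1..10 as a function nat => real (only indices 1..10 matter).\<close>

definition cA :: "(nat \<Rightarrow> real) \<Rightarrow> complex" where "cA a = Complex (a 1) (a 2)"
definition cB :: "(nat \<Rightarrow> real) \<Rightarrow> complex" where "cB a = Complex (a 3) (a 4)"
definition cC :: "(nat \<Rightarrow> real) \<Rightarrow> complex" where "cC a = Complex (a 5) (a 6)"
definition cD :: "(nat \<Rightarrow> real) \<Rightarrow> complex" where "cD a = Complex (a 7) (a 8)"
definition cE :: "(nat \<Rightarrow> real) \<Rightarrow> complex" where "cE a = Complex (a 9) (a 10)"

definition numer_poly :: "(nat \<Rightarrow> real) \<Rightarrow> complex poly" where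
  "numer_poly a = [:cC a, cB a, cA a:]"
definition denom_poly :: "(nat \<Rightarrow> real) \<Rightarrow> complex poly" where
  "denom_poly a = [:1, - cD a, - cE a:]"

definition sproj :: "complex \<Rightarrow> real \<times> real \<times> real" where
  "sproj w = (2 * Re w / (1 + (cmod w)\<^sup>2), 2 * Im w / (1 + (cmod w)\<^sup>2),
              ((cmod w)\<^sup>2 - 1) / (1 + (cmod w)\<^sup>2))"

text \<open>S(Psi[alpha](z)), with Psi[alpha] viewed as a map into the Riemann sphere:
  at poles (denominator zero) the value is infinity, whose image under S is the north pole.\<close>
definition SPsi :: "(nat \<Rightarrow> real) \<Rightarrow> complex \<Rightarrow> real \<times> real \<times> real" where
  "SPsi a z = (if poly (denom_poly a) z = 0 then (0, 0, 1)
               else sproj (poly (numer_poly a) z / poly (denom_poly a) z))"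

definition beta :: "nat \<Rightarrow> real" where
  "beta i = (if i \<in> {1,2,5,6} then 0 else if i \<in> {3,4,7,8} then -1 else -2)"

definition K :: "real \<Rightarrow> nat \<Rightarrow> (nat \<Rightarrow> real) \<Rightarrow> complex \<Rightarrow> real \<times> real \<times> real" where
  "K r i a z = (r powr beta i) *\<^sub>R
     vector_derivative (\<lambda>t::real. SPsi (a(i := a i + t)) z) (at 0)"

end

theory Submission imports Defs "HOL-Computational_Algebra.Polynomial_Factorial" "HOL-Computational_Algebra.Field_as_Ring" begin

definition col1 :: "complex \<Rightarrow> real \<times> real \<times> real" where
 "col1 w = (let x = Re w; y = Im w; m = 1 + (x^2 + y^2) in
     (2/m - 4*x*x/m^2, -4*x*y/m^2, 4*x/m^2))"
definition col2 :: "complex \<Rightarrow> real \<times> real \<times> real" where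
 "col2 w = (let x = Re w; y = Im w; m = 1 + (x^2 + y^2) in
     (-4*x*y/m^2, 2/m - 4*y*y/m^2, 4*y/m^2))"
definition dS :: "complex \<Rightarrow> complex \<Rightarrow> real \<times> real \<times> real" where
 "dS w v = Re v *\<^sub>R col1 w + Im v *\<^sub>R col2 w"

lemma alg1: "(m::real) \<noteq> 0 \<Longrightarrow>
   (2*x'*m - 2*x*(2*x*x'+2*y*y'))/(m*m) = x'*(2/m - 4*x*x/m^2) + y'*(-4*x*y/m^2)"
  by (simp add: field_simps power2_eq_square)

lemma alg3:
  assumes "(m::real) \<noteq> 0" "m = 1 + (x^2+y^2)"
  shows "((2*x*x'+2*y*y')*m - (x^2+y^2-1)*(2*x*x'+2*y*y'))/(m*m) = x'*(4*x/m^2) + y'*(4*y/m^2)"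
proof -
  have "(2*x*x'+2*y*y')*m - (x^2+y^2-1)*(2*x*x'+2*y*y') = 2*(2*x*x'+2*y*y')"
    using assms(2) by (simp add: algebra_simps)
  then show ?thesis using assms(1) by (simp add: field_simps power2_eq_square)
qed

lemma sproj_deriv:
  assumes g: "(g has_vector_derivative g') (at 0)"
  shows "((\<lambda>t. sproj (g t)) has_vector_derivative dS (g 0) g') (at 0)"
proof -
  define X where "X t = Re (g t)" for t
  define Y where "Y t = Im (g t)" for t
  define M where "M t = 1 + (X t^2 + Y t^2)" for t
  have X: "(X has_real_derivative Re g') (at 0)"
    using bounded_linear.has_vector_derivative[OF bounded_linear_Re g]
    unfolding X_def has_real_derivative_iff_has_vector_derivative by simp
  have Y: "(Y has_real_derivative Im g') (at 0)"
    using bounded_linear.has_vector_derivative[OF bounded_linear_Im g]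
    unfolding Y_def has_real_derivative_iff_has_vector_derivative by simp
  have Mp: "\<And>t. M t \<noteq> 0" unfolding M_def by (smt (verit) zero_le_power2)
  have S: "((\<lambda>t. X t^2 + Y t^2) has_real_derivative (2*X 0*Re g' + 2*Y 0*Im g')) (at 0)"
    by (rule derivative_eq_intros X Y refl | simp)+
  have M: "(M has_real_derivative (2*X 0*Re g' + 2*Y 0*Im g')) (at 0)"
    unfolding M_def by (rule derivative_eq_intros S refl | simp)+
  have S1: "((\<lambda>t. X t^2 + Y t^2 - 1) has_real_derivative (2*X 0*Re g' + 2*Y 0*Im g')) (at 0)"
    by (rule derivative_eq_intros S refl | simp)+
  have X2: "((\<lambda>t. 2 * X t) has_real_derivative 2 * Re g') (at 0)"
    by (rule derivative_eq_intros X refl | simp)+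
  have Y2: "((\<lambda>t. 2 * Y t) has_real_derivative 2 * Im g') (at 0)"
    by (rule derivative_eq_intros Y refl | simp)+
  have c1: "((\<lambda>t. 2 * X t / M t) has_real_derivative
      Re g' * (2/M 0 - 4*X 0*X 0/(M 0)^2) + Im g' * (-4*X 0*Y 0/(M 0)^2)) (at 0)"
  proof -
    have "((\<lambda>t. 2 * X t / M t) has_real_derivative
      (2*Re g' * M 0 - 2*X 0*(2*X 0*Re g' + 2*Y 0*Im g'))/(M 0 * M 0)) (at 0)"
      by (rule DERIV_divide[OF X2 M Mp])
    moreover have "(2*Re g' * M 0 - 2*X 0*(2*X 0*Re g' + 2*Y 0*Im g'))/(M 0 * M 0) =
       Re g' * (2/M 0 - 4*X 0*X 0/(M 0)^2) + Im g' * (-4*X 0*Y 0/(M 0)^2)"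
      using Mp[of 0] by (simp add: field_simps power2_eq_square)
    ultimately show ?thesis by simp
  qed
  have c2: "((\<lambda>t. 2 * Y t / M t) has_real_derivative
      Re g' * (-4*X 0*Y 0/(M 0)^2) + Im g' * (2/M 0 - 4*Y 0*Y 0/(M 0)^2)) (at 0)"
  proof -
    have "((\<lambda>t. 2 * Y t / M t) has_real_derivative
      (2*Im g' * M 0 - 2*Y 0*(2*X 0*Re g' + 2*Y 0*Im g'))/(M 0 * M 0)) (at 0)"
      by (rule DERIV_divide[OF Y2 M Mp])
    moreover have "(2*Im g' * M 0 - 2*Y 0*(2*X 0*Re g' + 2*Y 0*Im g'))/(M 0 * M 0) =
       Re g' * (-4*X 0*Y 0/(M 0)^2) + Im g' * (2/M 0 - 4*Y 0*Y 0/(M 0)^2)"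
      using Mp[of 0] by (simp add: field_simps power2_eq_square)
    ultimately show ?thesis by simp
  qed
  have c3: "((\<lambda>t. (X t^2 + Y t^2 - 1) / M t) has_real_derivative
      Re g' * (4*X 0/(M 0)^2) + Im g' * (4*Y 0/(M 0)^2)) (at 0)"
  proof -
    have "((\<lambda>t. (X t^2 + Y t^2 - 1) / M t) has_real_derivative
      ((2*X 0*Re g' + 2*Y 0*Im g') * M 0 - (X 0^2 + Y 0^2 - 1)*(2*X 0*Re g' + 2*Y 0*Im g'))/(M 0 * M 0)) (at 0)"
      by (rule DERIV_divide[OF S1 M Mp])
    then show ?thesis using alg3[OF Mp[of 0] M_def[of 0], of "Re g'" "Im g'"] by simp
  qed
  have eq: "(\<lambda>t. sproj (g t)) = (\<lambda>t. (2 * X t / M t, 2 * Y t / M t, (X t^2 + Y t^2 - 1) / M t))"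
    by (simp add: fun_eq_iff sproj_def cmod_power2 X_def Y_def M_def)
  have "((\<lambda>t. (2 * X t / M t, 2 * Y t / M t, (X t^2 + Y t^2 - 1) / M t)) has_vector_derivative
     (Re g' * (2/M 0 - 4*X 0*X 0/(M 0)^2) + Im g' * (-4*X 0*Y 0/(M 0)^2),
      Re g' * (-4*X 0*Y 0/(M 0)^2) + Im g' * (2/M 0 - 4*Y 0*Y 0/(M 0)^2),
      Re g' * (4*X 0/(M 0)^2) + Im g' * (4*Y 0/(M 0)^2))) (at 0)"
    using c1 c2 c3 unfolding has_real_derivative_iff_has_vector_derivative
    by (intro has_vector_derivative_Pair)
  moreover have "dS (g 0) g' = (Re g' * (2/M 0 - 4*X 0*X 0/(M 0)^2) + Im g' * (-4*X 0*Y 0/(M 0)^2),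
      Re g' * (-4*X 0*Y 0/(M 0)^2) + Im g' * (2/M 0 - 4*Y 0*Y 0/(M 0)^2),
      Re g' * (4*X 0/(M 0)^2) + Im g' * (4*Y 0/(M 0)^2))"
    by (simp add: dS_def col1_def col2_def Let_def X_def Y_def M_def)
  ultimately show ?thesis using eq by simp
qed


definition nv :: "nat \<Rightarrow> complex \<Rightarrow> complex" where
 "nv i z = (if i = 1 then z^2 else if i = 2 then \<i>*z^2 else if i = 3 then z else if i = 4 then \<i>*z
    else if i = 5 then 1 else if i = 6 then \<i> else 0)"
definition dv :: "nat \<Rightarrow> complex \<Rightarrow> complex" where
 "dv i z = (if i = 7 then -z else if i = 8 then -(\<i>*z) else if i = 9 then -(z^2) else if i = 10 then -(\<i>*z^2) else 0)"

lemma set10: "{1..10::nat} = {1,2,3,4,5,6,7,8,9,10}" by (auto; arith)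

lemma pert:
  assumes "i \<in> {1..10}"
  shows "poly (numer_poly (a(i := a i + t))) z = poly (numer_poly a) z + of_real t * nv i z"
    "poly (denom_poly (a(i := a i + t))) z = poly (denom_poly a) z + of_real t * dv i z"
  using assms unfolding set10
  by (auto simp: numer_poly_def denom_poly_def cA_def cB_def cC_def cD_def cE_def nv_def dv_def
      Complex_eq algebra_simps power2_eq_square)


lemma affine_quot_deriv:
  fixes n0 n1 d0 d1 :: complex
  assumes d0: "d0 \<noteq> 0"
  shows "((\<lambda>t::real. (n0 + of_real t * n1) / (d0 + of_real t * d1)) has_vector_derivative
          ((n1 * d0 - n0 * d1) / (d0 * d0))) (at 0)"
proof -
  have N: "((\<lambda>x. n0 + x * n1) has_field_derivative n1) (at (of_real 0))"
    by (rule derivative_eq_intros refl | simp)+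
  have D: "((\<lambda>x. d0 + x * d1) has_field_derivative d1) (at (of_real 0))"
    by (rule derivative_eq_intros refl | simp)+
  have "((\<lambda>x. (n0 + x * n1) / (d0 + x * d1)) has_field_derivative
     (n1 * (d0 + of_real 0 * d1) - (n0 + of_real 0 * n1) * d1) / ((d0 + of_real 0 * d1) * (d0 + of_real 0 * d1)))
     (at (of_real 0))"
    by (rule DERIV_divide[OF N D]) (use d0 in simp)
  then have "((\<lambda>x. (n0 + x * n1) / (d0 + x * d1)) has_field_derivative
     ((n1 * d0 - n0 * d1) / (d0 * d0))) (at (of_real 0))" by simp
  from has_vector_derivative_real_field[OF this] show ?thesis by simp
qed

lemma K_eq:
  assumes d: "poly (denom_poly a) z \<noteq> 0" and i: "i \<in> {1..10}"
  shows "K r i a z = r powr beta i *\<^sub>R dS (poly (numer_poly a) z / poly (denom_poly a) z)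
     ((nv i z * poly (denom_poly a) z - poly (numer_poly a) z * dv i z)
       / (poly (denom_poly a) z * poly (denom_poly a) z))"
proof -
  define n0 where "n0 = poly (numer_poly a) z"
  define d0 where "d0 = poly (denom_poly a) z"
  define g where "g t = (n0 + of_real t * nv i z) / (d0 + of_real t * dv i z)" for t :: real
  have d0: "d0 \<noteq> 0" using d by (simp add: d0_def)
  have gd: "(g has_vector_derivative ((nv i z * d0 - n0 * dv i z) / (d0 * d0))) (at 0)"
    unfolding g_def by (rule affine_quot_deriv[OF d0])
  have sd: "((\<lambda>t. sproj (g t)) has_vector_derivative dS (g 0) ((nv i z * d0 - n0 * dv i z) / (d0 * d0))) (at 0)"
    by (rule sproj_deriv[OF gd])
  let ?S = "{t::real. d0 + of_real t * dv i z \<noteq> 0}"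
  have opS: "open ?S"
    by (rule open_Collect_neq) (auto intro!: continuous_intros)
  have "((\<lambda>t. SPsi (a(i := a i + t)) z) has_vector_derivative dS (g 0) ((nv i z * d0 - n0 * dv i z) / (d0 * d0))) (at 0)"
  proof (rule has_vector_derivative_transform_within_open[OF sd opS])
    show "0 \<in> ?S" using d0 by simp
    fix t assume "t \<in> ?S"
    then show "sproj (g t) = SPsi (a(i := a i + t)) z"
      unfolding SPsi_def pert[OF i] g_def n0_def d0_def by simp
  qed
  then have "vector_derivative (\<lambda>t. SPsi (a(i := a i + t)) z) (at 0) = dS (g 0) ((nv i z * d0 - n0 * dv i z) / (d0 * d0))"
    by (rule vector_derivative_at)
  then show ?thesis unfolding K_def by (simp add: g_def n0_def d0_def)
qed


lemma inj_alg:
  fixes x y m p q :: real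
  assumes m: "m > 0"
    and e1: "p*(2/m - 4*x*x/m^2) + q*(-4*x*y/m^2) = 0"
    and e2: "p*(-4*x*y/m^2) + q*(2/m - 4*y*y/m^2) = 0"
    and e3: "p*(4*x/m^2) + q*(4*y/m^2) = 0"
  shows "p = 0 \<and> q = 0"
proof -
  have "(p*(4*x/m^2) + q*(4*y/m^2)) * m^2 = 4*(x*p+y*q)"
    using m by (simp add: algebra_simps)
  with e3 have s: "x*p + y*q = 0" by simp
  have "(p*(2/m - 4*x*x/m^2) + q*(-4*x*y/m^2)) * m^2 = 2*p*m - 4*x*(x*p+y*q)"
    using m by (simp add: algebra_simps power2_eq_square)
  with e1 s m have p0: "p = 0" by simp
  have "(p*(-4*x*y/m^2) + q*(2/m - 4*y*y/m^2)) * m^2 = 2*q*m - 4*y*(x*p+y*q)"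
    using m by (simp add: algebra_simps power2_eq_square)
  with e2 s m have q0: "q = 0" by simp
  show ?thesis using p0 q0 by simp
qed

lemma dS_inj:
  assumes "dS w v = 0" shows "v = 0"
proof -
  define x where "x = Re w"
  define y where "y = Im w"
  define m where "m = 1 + (x^2 + y^2)"
  define p where "p = Re v"
  define q where "q = Im v"
  have m: "m > 0" unfolding m_def by (smt (verit) zero_le_power2)
  have c1: "col1 w = (2/m - 4*x*x/m^2, -4*x*y/m^2, 4*x/m^2)"
    unfolding col1_def Let_def x_def y_def m_def ..
  have c2: "col2 w = (-4*x*y/m^2, 2/m - 4*y*y/m^2, 4*y/m^2)"
    unfolding col2_def Let_def x_def y_def m_def ..
  have "dS w v = (p*(2/m - 4*x*x/m^2) + q*(-4*x*y/m^2),
     p*(-4*x*y/m^2) + q*(2/m - 4*y*y/m^2), p*(4*x/m^2) + q*(4*y/m^2))"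
    unfolding dS_def c1 c2 p_def q_def by simp
  with assms have "p*(2/m - 4*x*x/m^2) + q*(-4*x*y/m^2) = 0"
     "p*(-4*x*y/m^2) + q*(2/m - 4*y*y/m^2) = 0" "p*(4*x/m^2) + q*(4*y/m^2) = 0"
    by (simp_all only: zero_prod_def prod.inject)
  then have "p = 0 \<and> q = 0" using inj_alg[OF m] by blast
  then show ?thesis by (simp add: p_def q_def complex_eq_iff)
qed

lemma linear_dS: "linear (dS w)"
  unfolding dS_def by (rule linearI) (simp_all add: algebra_simps scaleR_add_left)


lemma expand10:
  "(\<Sum>i=1..10. complex_of_real (e i) * (nv i z * d0 - n0 * dv i z)) =
   (Complex (e 5) (e 6) + z * Complex (e 3) (e 4) + z^2 * Complex (e 1) (e 2)) * d0
   + n0 * (z * Complex (e 7) (e 8) + z^2 * Complex (e 9) (e 10))"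
  unfolding set10 by (simp add: nv_def dv_def Complex_eq algebra_simps power2_eq_square)

lemma F_zero:
  fixes F :: "complex poly"
  assumes "\<forall>z. poly D z \<noteq> 0 \<longrightarrow> poly F z = 0" "D \<noteq> 0"
  shows "F = 0"
proof (rule ccontr)
  assume F: "F \<noteq> 0"
  have "finite {z. poly F z = 0}" by (rule poly_roots_finite[OF F])
  moreover have "finite {z. poly D z = 0}" by (rule poly_roots_finite[OF assms(2)])
  ultimately have "finite ({z. poly F z = 0} \<union> {z. poly D z = 0})" by simp
  moreover have "{z. poly F z = 0} \<union> {z. poly D z = 0} = UNIV" using assms(1) by auto
  ultimately show False using infinite_UNIV_char_0[where 'a=complex] by simp
qed


lemma poly_part:
  fixes Rp W N Dp :: "complex poly"
  assumes cop: "coprime N Dp" and degN: "degree N = 2" and degR: "degree Rp \<le> 2"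
    and Dp0: "poly Dp 0 = 1" and eq: "Rp * Dp + N * W = 0" and W0: "poly W 0 = 0"
  shows "Rp = 0 \<and> W = 0"
proof -
  have "Rp * Dp = - (N * W)" using eq by (simp add: eq_neg_iff_add_eq_0)
  then have "N dvd Rp * Dp" by simp
  then have "N dvd Rp" using coprime_dvd_mult_left_iff[OF cop] by simp
  then obtain k where k: "Rp = N * k" by (elim dvdE)
  have N0: "N \<noteq> 0" using degN by auto
  have "N * (k * Dp + W) = 0" using eq k by (simp add: algebra_simps)
  then have kw: "k * Dp + W = 0" using N0 by simp
  have "k = 0"
  proof (rule ccontr)
    assume k0: "k \<noteq> 0"
    have "degree Rp = degree N + degree k" using k degree_mult_eq[OF N0 k0] by simp
    then have "degree k = 0" using degN degR by simp
    then have kc: "k = [:coeff k 0:]" by (rule degree_0_id[symmetric])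
    with k0 have c0: "coeff k 0 \<noteq> 0" by auto
    have "poly (k * Dp + W) 0 = 0" using kw by simp
    then have "poly k 0 = 0" using Dp0 W0 by simp
    moreover have "poly k 0 = coeff k 0" by (subst kc) simp
    ultimately show False using c0 by simp
  qed
  then show ?thesis using k kw by simp
qed


theorem lemma4p1:
  fixes a :: "nat \<Rightarrow> real" and r :: real
  assumes irred: "coprime (numer_poly a) (denom_poly a)"
    and lead: "cA a \<noteq> 0"
    and r: "r > 0"
  shows "\<forall>c :: nat \<Rightarrow> real.
           (\<forall>z :: complex. (\<Sum>i = 1..10. c i *\<^sub>R K r i a z) = 0)
           \<longrightarrow> (\<forall>i \<in> {1..10}. c i = 0)"
proof (intro allI impI)
  fix c :: "nat \<Rightarrow> real"
  assume H: "\<forall>z :: complex. (\<Sum>i = 1..10. c i *\<^sub>R K r i a z) = 0"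
  define e where "e i = c i * r powr beta i" for i
  define Rp where "Rp = [:Complex (e 5) (e 6), Complex (e 3) (e 4), Complex (e 1) (e 2):]"
  define W where "W = [:0, Complex (e 7) (e 8), Complex (e 9) (e 10):]"
  define F where "F = Rp * denom_poly a + numer_poly a * W"
  have roots: "\<forall>z. poly (denom_poly a) z \<noteq> 0 \<longrightarrow> poly F z = 0"
  proof (intro allI impI)
    fix z assume d: "poly (denom_poly a) z \<noteq> 0"
    define n0 where "n0 = poly (numer_poly a) z"
    define d0 where "d0 = poly (denom_poly a) z"
    define w where "w = n0 / d0"
    define X where "X i = nv i z * d0 - n0 * dv i z" for i
    have d0: "d0 \<noteq> 0" using d by (simp add: d0_def)
    have "(\<Sum>i = 1..10. c i *\<^sub>R K r i a z) = (\<Sum>i = 1..10. e i *\<^sub>R dS w (X i / (d0 * d0)))"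
      by (rule sum.cong) (auto simp: K_eq[OF d] e_def w_def X_def n0_def d0_def)
    also have "\<dots> = dS w (\<Sum>i = 1..10. e i *\<^sub>R (X i / (d0 * d0)))"
      by (simp add: linear_sum[OF linear_dS] linear_scale[OF linear_dS])
    finally have "dS w (\<Sum>i = 1..10. e i *\<^sub>R (X i / (d0 * d0))) = 0" using H by simp
    then have V: "(\<Sum>i = 1..10. e i *\<^sub>R (X i / (d0 * d0))) = 0" by (rule dS_inj)
    have "(\<Sum>i = 1..10. e i *\<^sub>R (X i / (d0 * d0))) = (\<Sum>i = 1..10. complex_of_real (e i) * X i) / (d0 * d0)"
      by (simp add: sum_divide_distrib scaleR_conv_of_real)
    with V d0 have "(\<Sum>i = 1..10. complex_of_real (e i) * X i) = 0" by simp
    then have "(Complex (e 5) (e 6) + z * Complex (e 3) (e 4) + z^2 * Complex (e 1) (e 2)) * d0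
      + n0 * (z * Complex (e 7) (e 8) + z^2 * Complex (e 9) (e 10)) = 0"
      unfolding X_def expand10 .
    then show "poly F z = 0"
      by (simp add: F_def Rp_def W_def n0_def d0_def algebra_simps power2_eq_square)
  qed
  have D0: "denom_poly a \<noteq> 0" by (simp add: denom_poly_def)
  have "F = 0" by (rule F_zero[OF roots D0])
  then have RW: "Rp = 0 \<and> W = 0"
    by (intro poly_part[OF irred]) (auto simp: F_def numer_poly_def denom_poly_def lead W_def Rp_def)
  then have e0: "\<forall>i\<in>{1..10}. e i = 0"
    unfolding set10 by (simp add: Rp_def W_def complex_eq_iff)
  show "\<forall>i \<in> {1..10}. c i = 0"
  proof
    fix i assume "i \<in> {1..(10::nat)}"
    then have "e i = 0" using e0 by blast
    then have "c i * r powr beta i = 0" by (simp add: e_def)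
    moreover have "r powr beta i > 0" using r by simp
    ultimately show "c i = 0" by simp
  qed
qed

end
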